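(* Let $H$ be a Hilbert space over $\mathbb{R}$ or $\mathbb{C}$, $V\subseteq H$, $n\ge1$, and let $C_1,\dots,C_n$ be closed convex subsets of $H$ with $0\in C_n\subseteq C_{n-1}\subseteq\cdots\subseteq C_1\subseteq V$. Let $P_{C_i}:V\to V$ be the metric projection onto $C_i$ and $P=P_{C_n}\circ\cdots\circ P_{C_1}$. Then $P_{C_n}$ is the unique pseudo-inverse of $P$ (with respect to the norm of $H$). In particular, for a closed convex $C\subseteq V$ with $0\in C$, $P_C$ is its own unique pseudo-inverse.
   Context: The metric projection onto a nonempty closed convex subset $C$ of a Hilbert space maps each point to its unique nearest point in $C$. For subsets $V,W$ of normed spaces and $T:V\to W$, an operator $S:W\to V$ is a pseudo-inverse of $T$ if: (BAS) for every $w\in W$, the minimum $m_w=\min_{v\in V}\|T(v)-w\|$ is attained, the norm attains its minimum on $\{v\in V:\|T(v)-w\|=m_w\}$, and $S(w)\in\arg\min\{\|v\|:v\in V,\ \|T(v)-w\|=m_w\}$; and (MP2) $S\circ T\circ S=S$. *)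

theory Defs
  imports "HOL-Analysis.Analysis"
begin

text \<open>Same definition as the library's closest_point, which however is
  restricted to heine_borel (finite-dimensional) spaces.\<close>
definition metric_proj :: "'a::real_inner set \<Rightarrow> 'a \<Rightarrow> 'a" where
  "metric_proj C x = (SOME y. y \<in> C \<and> (\<forall>z\<in>C. dist x y \<le> dist x z))"

definition pseudo_inverse ::
  "'a::real_normed_vector set \<Rightarrow> 'b::real_normed_vector set \<Rightarrow> ('a \<Rightarrow> 'b) \<Rightarrow> ('b \<Rightarrow> 'a) \<Rightarrow> bool"
where
  "pseudo_inverse V W T S \<longleftrightarrow>
     (\<forall>w\<in>W.
        (\<exists>v0\<in>V. \<forall>v\<in>V. norm (T v0 - w) \<le> norm (T v - w)) \<and>
        (let m = (INF v\<in>V. norm (T v - w));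
             A = {v\<in>V. norm (T v - w) = m}
         in (\<exists>a\<in>A. \<forall>b\<in>A. norm a \<le> norm b) \<and>
            S w \<in> A \<and> (\<forall>b\<in>A. norm (S w) \<le> norm b))) \<and>
     (\<forall>w\<in>W. S (T (S w)) = S w)"

fun proj_comp :: "(nat \<Rightarrow> 'a::real_inner set) \<Rightarrow> nat \<Rightarrow> 'a \<Rightarrow> 'a" where
  "proj_comp C 0 = id"
| "proj_comp C (Suc k) = metric_proj (C (Suc k)) \<circ> proj_comp C k"

end

theory Submission imports Defs begin

lemma parallelogram_law:
  fixes x y :: "'a::real_inner"
  shows "norm (x+y)^2 + norm (x-y)^2 = 2*norm x^2 + 2*norm y^2"
  by (simp add: power2_norm_eq_inner inner_add inner_diff inner_commute algebra_simps)

lemma proj_exists: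
  fixes a :: "'a::{real_inner,complete_space}"
  assumes cl: "closed S" and cv: "convex S" and ne: "S \<noteq> {}"
  shows "\<exists>y\<in>S. \<forall>z\<in>S. dist a y \<le> dist a z"
proof -
  define d where "d = infdist a S"
  have d0: "d \<ge> 0" unfolding d_def by (rule infdist_nonneg)
  have dle: "\<And>z. z \<in> S \<Longrightarrow> d \<le> dist a z" unfolding d_def by (rule infdist_le)
  have "\<forall>k. \<exists>y. y \<in> S \<and> dist a y < d + inverse (real (Suc k))"
  proof
    fix k
    have "(INF z\<in>S. dist a z) < d + inverse (real (Suc k))"
      using ne by (simp add: d_def infdist_notempty)
    then show "\<exists>y. y \<in> S \<and> dist a y < d + inverse (real (Suc k))"
      using ne by (subst (asm) cINF_less_iff) auto
  qed
  then obtain f where f: "\<And>k. f k \<in> S" "\<And>k. dist a (f k) < d + inverse (real (Suc k))"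
    by metis
  define \<delta> where "\<delta> k = inverse (real (Suc k))" for k
  have dpos: "\<And>k. 0 < \<delta> k" and dle1: "\<And>k. \<delta> k \<le> 1" unfolding \<delta>_def by (auto simp: inverse_le_1_iff)
  have dmono: "\<And>m N. N \<le> m \<Longrightarrow> \<delta> m \<le> \<delta> N" unfolding \<delta>_def
    by (simp add: le_imp_inverse_le)
  have sq: "norm (f m - f k)^2 \<le> 4*d*\<delta> m + 2*\<delta> m^2 + 4*d*\<delta> k + 2*\<delta> k^2" for m k
  proof -
    let ?x = "a - f m" and ?y = "a - f k"
    have mid: "(1/2) *\<^sub>R f m + (1/2) *\<^sub>R f k \<in> S"
      using cv f(1) by (intro convexD) auto
    have "?x + ?y = 2 *\<^sub>R (a - ((1/2) *\<^sub>R f m + (1/2) *\<^sub>R f k))"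
      by (simp add: algebra_simps scaleR_2)
    then have "norm (?x + ?y) = 2 * dist a ((1/2) *\<^sub>R f m + (1/2) *\<^sub>R f k)"
      by (simp add: dist_norm)
    then have h1: "norm (?x + ?y) \<ge> 2*d" using dle[OF mid] by simp
    then have h1': "norm (?x + ?y)^2 \<ge> (2*d)^2" using d0 by (intro power_mono) auto
    have "norm ?x < d + \<delta> m" using f(2)[of m] by (simp add: dist_norm \<delta>_def)
    then have h2: "norm ?x^2 \<le> (d + \<delta> m)^2" by (intro power_mono) auto
    have "norm ?y < d + \<delta> k" using f(2)[of k] by (simp add: dist_norm \<delta>_def)
    then have h3: "norm ?y^2 \<le> (d + \<delta> k)^2" by (intro power_mono) auto
    have "?x - ?y = f k - f m" by simp
    then have "norm (f m - f k) = norm (?x - ?y)" by (simp add: norm_minus_commute)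
    then have "norm (f m - f k)^2 = 2*norm ?x^2 + 2*norm ?y^2 - norm (?x+?y)^2"
      using parallelogram_law[of ?x ?y] by simp
    also have "\<dots> \<le> 2*(d + \<delta> m)^2 + 2*(d + \<delta> k)^2 - (2*d)^2"
      using h1' h2 h3 by linarith
    finally show ?thesis by (simp add: power2_eq_square algebra_simps)
  qed
  have "Cauchy f"
  proof (rule metric_CauchyI)
    fix e :: real assume e: "e > 0"
    have "(\<lambda>k. 0 + inverse (real (Suc k))) \<longlonglongrightarrow> 0" by (rule LIMSEQ_inverse_real_of_nat_add)
    then have "\<delta> \<longlonglongrightarrow> 0" by (simp add: \<delta>_def[abs_def])
    moreover have "e^2 / (8*d+4) > 0" using e d0 by auto
    ultimately obtain N where N0: "\<forall>n\<ge>N. norm (\<delta> n - 0) < e^2 / (8*d+4)"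
      using LIMSEQ_D by blast
    have N: "\<delta> N < e^2 / (8*d+4)" using N0[rule_format, of N] dpos[of N] by simp
    have "\<forall>m\<ge>N. \<forall>k\<ge>N. dist (f m) (f k) < e"
    proof (intro allI impI)
      fix m k assume mk: "N \<le> m" "N \<le> k"
      have a1: "\<delta> m^2 \<le> \<delta> m" using dpos[of m] dle1[of m] by (simp add: power2_eq_square mult_le_cancel_left1)
      have a2: "\<delta> k^2 \<le> \<delta> k" using dpos[of k] dle1[of k] by (simp add: power2_eq_square mult_le_cancel_left1)
      have "norm (f m - f k)^2 \<le> (4*d+2)*\<delta> m + (4*d+2)*\<delta> k"
        using sq[of m k] a1 a2 by (simp add: algebra_simps)
      also have "\<dots> \<le> (8*d+4) * \<delta> N"
      proof -
        have "(4*d+2)*\<delta> m \<le> (4*d+2)*\<delta> N" using dmono[OF mk(1)] d0 by (intro mult_left_mono) auto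
        moreover have "(4*d+2)*\<delta> k \<le> (4*d+2)*\<delta> N" using dmono[OF mk(2)] d0 by (intro mult_left_mono) auto
        ultimately show ?thesis by (simp add: algebra_simps)
      qed
      also have "\<dots> < e^2" using N d0 by (simp add: pos_less_divide_eq mult.commute)
      finally have "norm (f m - f k)^2 < e^2" .
      then show "dist (f m) (f k) < e" using e by (simp add: dist_norm power_less_imp_less_base)
    qed
    then show "\<exists>N. \<forall>m\<ge>N. \<forall>k\<ge>N. dist (f m) (f k) < e" by blast
  qed
  then obtain l where l: "f \<longlonglongrightarrow> l" using Cauchy_convergent_iff convergent_def by blast
  have lS: "l \<in> S" using closed_sequentially[OF cl f(1) l] .
  have t1: "(\<lambda>k. dist a (f k)) \<longlonglongrightarrow> dist a l" by (intro tendsto_intros l)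
  have t2: "(\<lambda>k. dist a (f k)) \<longlonglongrightarrow> d"
  proof (rule tendsto_sandwich[of "\<lambda>_. d" _ _ "\<lambda>k. d + inverse (real (Suc k))"])
    show "\<forall>\<^sub>F n in sequentially. d \<le> dist a (f n)" using dle f(1) by auto
    show "\<forall>\<^sub>F n in sequentially. dist a (f n) \<le> d + inverse (real (Suc n))"
      using f(2) by (intro always_eventually allI less_imp_le) 
    show "(\<lambda>k. d + inverse (real (Suc k))) \<longlonglongrightarrow> d" by (rule LIMSEQ_inverse_real_of_nat_add)
  qed auto
  have "dist a l = d" using LIMSEQ_unique[OF t1 t2] .
  then show ?thesis using lS dle by auto
qed


lemma dn: "dist w x = norm (x - w)"
  for w :: "'a::real_normed_vector"
  by (simp add: dist_norm norm_minus_commute)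

lemma mp_props:
  fixes x :: "'a::{real_inner,complete_space}"
  assumes "closed C" "convex C" "C \<noteq> {}"
  shows "metric_proj C x \<in> C \<and> (\<forall>z\<in>C. dist x (metric_proj C x) \<le> dist x z)"
proof -
  have "\<exists>y. y \<in> C \<and> (\<forall>z\<in>C. dist x y \<le> dist x z)" using proj_exists[OF assms, of x] by blast
  then show ?thesis unfolding metric_proj_def by (rule someI_ex)
qed

lemma mp_unique:
  fixes x :: "'a::{real_inner,complete_space}"
  assumes "closed C" "convex C" "y \<in> C" "\<forall>z\<in>C. dist x y \<le> dist x z"
  shows "metric_proj C x = y"
  using mp_props[OF assms(1,2), of x] assms any_closest_point_unique[OF assms(2,1)]
  by blast

lemma mp_fix:
  fixes x :: "'a::{real_inner,complete_space}"
  assumes "closed C" "convex C" "x \<in> C"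
  shows "metric_proj C x = x"
  using mp_unique[OF assms] by simp

lemma mp_norm:
  fixes x :: "'a::{real_inner,complete_space}"
  assumes "closed C" "convex C" "0 \<in> C"
  shows "norm (metric_proj C x) \<le> norm x \<and> (norm (metric_proj C x) = norm x \<longrightarrow> metric_proj C x = x)"
proof -
  let ?p = "metric_proj C x"
  have p: "?p \<in> C" "\<forall>z\<in>C. dist x ?p \<le> dist x z" using mp_props[OF assms(1,2)] assms(3) by blast+
  have "inner (x - ?p) (0 - ?p) \<le> 0"
    using any_closest_point_dot[OF assms(2,1) p(1) assms(3) p(2)] .
  then have ip: "inner (x - ?p) ?p \<ge> 0" by (simp add: inner_minus_right)
  have "norm x^2 = norm ?p^2 + norm (x - ?p)^2 + 2 * inner (x - ?p) ?p"
    by (simp add: power2_norm_eq_inner inner_diff inner_commute algebra_simps)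
  then have key: "norm ?p^2 + norm (x - ?p)^2 \<le> norm x^2" using ip by linarith
  then have "norm ?p^2 \<le> norm x^2" by (smt (verit) zero_le_power2)
  then have le: "norm ?p \<le> norm x" by (simp add: power2_le_iff_abs_le)
  moreover have "norm ?p = norm x \<longrightarrow> ?p = x"
  proof
    assume "norm ?p = norm x"
    then have "norm (x - ?p)^2 \<le> 0" using key by simp
    then show "?p = x" by simp
  qed
  ultimately show ?thesis by blast
qed

theorem mainTheorem9:
  fixes V :: "'a::{real_inner, complete_space} set"
    and C :: "nat \<Rightarrow> 'a set"
    and n :: nat
  assumes "n \<ge> 1"
    and "\<forall>i\<in>{1..n}. closed (C i) \<and> convex (C i)"
    and "0 \<in> C n"
    and "\<forall>i\<in>{1..<n}. C (Suc i) \<subseteq> C i"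
    and "C 1 \<subseteq> V"
  shows "pseudo_inverse V V (proj_comp C n) (metric_proj (C n)) \<and>
         (\<forall>S. pseudo_inverse V V (proj_comp C n) S \<longrightarrow> (\<forall>w\<in>V. S w = metric_proj (C n) w))"
proof -
  note n1 = assms(1) and clcv = assms(2) and zn = assms(3) and chain = assms(4) and C1V = assms(5)
  have sub: "C j \<subseteq> C i" if "1 \<le> i" "i \<le> j" "j \<le> n" for i j
    using that(2,3,1)
  proof (induction j rule: dec_induct)
    case base then show ?case by simp
  next
    case (step j)
    then have "C (Suc j) \<subseteq> C j" using chain by auto
    with step show ?case by auto
  qed
  have cc: "closed (C i)" "convex (C i)" if "1 \<le> i" "i \<le> n" for i using clcv that by auto
  have zi: "0 \<in> C i" if "1 \<le> i" "i \<le> n" for i using sub[OF that order.refl] zn by auto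
  have CnV: "C n \<subseteq> V" using sub[of 1 n] n1 C1V by auto
  have cnne: "C n \<noteq> {}" using zn by auto
  note ccn = cc[OF n1 order.refl]
  let ?P = "proj_comp C n" and ?p = "metric_proj (C n)"
  obtain m where nm: "n = Suc m" using n1 by (cases n) auto
  have Pin: "?P v \<in> C n" for v
    using mp_props[OF ccn cnne] by (simp add: nm)
  have Pfix: "k \<le> n \<Longrightarrow> c \<in> C n \<Longrightarrow> proj_comp C k c = c" for k c
  proof (induction k)
    case 0 then show ?case by simp
  next
    case (Suc k)
    then have "c \<in> C (Suc k)" using sub[of "Suc k" n] by auto
    then show ?case using Suc mp_fix[OF cc[of "Suc k"]] by auto
  qed
  have Pnorm: "k \<le> n \<Longrightarrow> norm (proj_comp C k v) \<le> norm v \<and> (norm (proj_comp C k v) = norm v \<longrightarrow> proj_comp C k v = v)" for k v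
  proof (induction k)
    case 0 then show ?case by simp
  next
    case (Suc k)
    let ?u = "proj_comp C k v"
    have h: "norm (metric_proj (C (Suc k)) ?u) \<le> norm ?u \<and>
      (norm (metric_proj (C (Suc k)) ?u) = norm ?u \<longrightarrow> metric_proj (C (Suc k)) ?u = ?u)"
      using mp_norm[OF cc[of "Suc k"] zi[of "Suc k"]] Suc.prems by auto
    have ih: "norm ?u \<le> norm v \<and> (norm ?u = norm v \<longrightarrow> ?u = v)" using Suc by auto
    show ?case using h ih by auto
  qed
  have pin: "?p w \<in> C n" and ple: "\<forall>z\<in>C n. dist w (?p w) \<le> dist w z" for w
    using mp_props[OF ccn cnne] by blast+
  have Pp: "?P (?p w) = ?p w" for w using Pfix[OF order.refl pin] .
  have low: "norm (?p w - w) \<le> norm (?P v - w)" for v w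
  proof -
    have "dist w (?p w) \<le> dist w (?P v)" using ple[of w] Pin[of v] by blast
    then show ?thesis by (simp only: dn)
  qed
  have Veq: "(INF v\<in>V. norm (?P v - w)) = norm (?p w - w)" for w
  proof (rule cInf_eq_minimum)
    show "norm (?p w - w) \<in> (\<lambda>v. norm (?P v - w)) ` V"
      using Pp[of w] pin[of w] CnV by (intro image_eqI[where x="?p w"]) auto
    show "\<And>x. x \<in> (\<lambda>v. norm (?P v - w)) ` V \<Longrightarrow> norm (?p w - w) \<le> x"
      using low by auto
  qed
  have Aeq: "v \<in> V \<Longrightarrow> norm (?P v - w) = norm (?p w - w) \<Longrightarrow> ?P v = ?p w" for v w
  proof -
    assume "norm (?P v - w) = norm (?p w - w)"
    then have "dist w (?P v) = dist w (?p w)" by (simp only: dn)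
    then have "\<forall>z\<in>C n. dist w (?P v) \<le> dist w z" using ple[of w] by (simp only:)
    then show "?P v = ?p w" by (rule mp_unique[OF ccn Pin[of v], THEN sym])
  qed
  have Pn: "norm (?P v) \<le> norm v \<and> (norm (?P v) = norm v \<longrightarrow> ?P v = v)" for v
    using Pnorm[OF order.refl] .
  have pv: "?p w \<in> V" for w using pin CnV by auto
  have core: "(\<exists>v0\<in>V. \<forall>v\<in>V. norm (?P v0 - w) \<le> norm (?P v - w)) \<and>
        (let m = (INF v\<in>V. norm (?P v - w)); A = {v\<in>V. norm (?P v - w) = m}
         in (\<exists>a\<in>A. \<forall>b\<in>A. norm a \<le> norm b) \<and> ?p w \<in> A \<and> (\<forall>b\<in>A. norm (?p w) \<le> norm b))" for w
  proof -
    define A where "A = {v\<in>V. norm (?P v - w) = norm (?p w - w)}"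
    have 1: "\<exists>v0\<in>V. \<forall>v\<in>V. norm (?P v0 - w) \<le> norm (?P v - w)"
    proof (rule bexI[of _ "?p w"])
      show "\<forall>v\<in>V. norm (?P (?p w) - w) \<le> norm (?P v - w)" unfolding Pp[of w] using low[of w] by blast
    qed (rule pv)
    have pA: "?p w \<in> A" using pv[of w] Pp[of w] unfolding A_def by simp
    have mn: "\<forall>b\<in>A. norm (?p w) \<le> norm b"
    proof
      fix b assume "b \<in> A"
      then have "?P b = ?p w" using Aeq unfolding A_def by blast
      then show "norm (?p w) \<le> norm b" using Pn[of b] by simp
    qed
    have "(let m = norm (?p w - w); A = {v\<in>V. norm (?P v - w) = m}
         in (\<exists>a\<in>A. \<forall>b\<in>A. norm a \<le> norm b) \<and> ?p w \<in> A \<and> (\<forall>b\<in>A. norm (?p w) \<le> norm b))"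
    proof -
      have "(\<exists>a\<in>A. \<forall>b\<in>A. norm a \<le> norm b) \<and> ?p w \<in> A \<and> (\<forall>b\<in>A. norm (?p w) \<le> norm b)"
        using pA mn by blast
      then show ?thesis unfolding A_def Let_def .
    qed
    then show ?thesis unfolding Veq[of w] using 1 by blast
  qed
  have part1: "pseudo_inverse V V ?P ?p"
    unfolding pseudo_inverse_def
    apply (intro conjI ballI)
      apply (rule core[THEN conjunct1])
     apply (rule core[THEN conjunct2])
    apply (simp only: Pp)
    apply (rule mp_fix[OF ccn pin])
    done
  have part2: "\<forall>w\<in>V. S w = ?p w" if S: "pseudo_inverse V V ?P S" for S
  proof
    fix w assume w: "w \<in> V"
    note L = S[unfolded pseudo_inverse_def, THEN conjunct1, rule_format, OF w, THEN conjunct2]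
    note L' = L[unfolded Let_def Veq[of w]]
    note SA0 = L'[THEN conjunct2, THEN conjunct1]
    note Smin = L'[THEN conjunct2, THEN conjunct2]
    have SA: "S w \<in> V" "norm (?P (S w) - w) = norm (?p w - w)" using SA0 by auto
    have PS: "?P (S w) = ?p w" using Aeq[OF SA] .
    have "?p w \<in> {v \<in> V. norm (?P v - w) = norm (?p w - w)}" using pv[of w] Pp[of w] by simp
    then have "norm (S w) \<le> norm (?p w)" by (rule bspec[OF Smin])
    then have "norm (?P (S w)) = norm (S w)" using Pn[of "S w"] PS by auto
    then have "?P (S w) = S w" using Pn[of "S w"] by blast
    then show "S w = ?p w" using PS by simp
  qed
  show ?thesis using part1 part2 by blast
qed

end
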